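(* Let $G$ be a group with identity $\mathbf{1}$, $S\subseteq G$ inverse-closed, and $X=\mathrm{Cay}(G;S)$. Let $\mathcal{A}^0_{\mathbf{1}}(X)$ be the group of colour-preserving automorphisms of $X$ that fix the vertex $\mathbf{1}$, and let \[S^*=\{\, s\in S \mid \text{no nontrivial element of } \mathcal{A}^0_{\mathbf{1}}(X) \text{ fixes } s\,\}.\] If $S^*$ generates $G$, then $X$ is strongly CCA.
   Context: Graphs are simple (possibly infinite). For an inverse-closed subset $S$ of a group $G$, $\mathrm{Cay}(G;S)$ has vertex set $G$ and an edge from $g$ to $gs$ for each $g\in G$, $s\in S$; the edge $g$—$gs$ is coloured $\{s,s^{-1}\}$. A graph automorphism is colour-preserving if it maps every edge to an edge of the same colour, and colour-permuting if whenever two edges have the same colour their images also have the same colour. A map $\varphi\colon G\to G$ is affine if $\varphi(x)=\alpha(gx)$ for some $\alpha\in\mathrm{Aut}(G)$, $g\in G$. $\mathrm{Cay}(G;S)$ is strongly CCA if every colour-permuting automorphism of it is affine. *)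

theory Defs
  imports "HOL-Algebra.Algebra"
begin

text \<open>Cayley graph Cay(G;S): vertex set carrier G, x adjacent to y iff y = x s for some
  s in S (i.e. inv x y in S). Graphs are simple, so loops (x = y) are not edges.\<close>
definition cay_adj :: "('a, 'b) monoid_scheme \<Rightarrow> 'a set \<Rightarrow> 'a \<Rightarrow> 'a \<Rightarrow> bool" where
  "cay_adj G S x y \<longleftrightarrow> x \<in> carrier G \<and> y \<in> carrier G \<and> x \<noteq> y \<and> inv\<^bsub>G\<^esub> x \<otimes>\<^bsub>G\<^esub> y \<in> S"

text \<open>Colour of the edge x -- y = x s is {s, inv s}.\<close>
definition cay_colour :: "('a, 'b) monoid_scheme \<Rightarrow> 'a \<Rightarrow> 'a \<Rightarrow> 'a set" where
  "cay_colour G x y = {inv\<^bsub>G\<^esub> x \<otimes>\<^bsub>G\<^esub> y, inv\<^bsub>G\<^esub> y \<otimes>\<^bsub>G\<^esub> x}"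

definition cay_aut :: "('a, 'b) monoid_scheme \<Rightarrow> 'a set \<Rightarrow> ('a \<Rightarrow> 'a) \<Rightarrow> bool" where
  "cay_aut G S \<phi> \<longleftrightarrow> bij_betw \<phi> (carrier G) (carrier G) \<and>
     (\<forall>x\<in>carrier G. \<forall>y\<in>carrier G. cay_adj G S x y \<longleftrightarrow> cay_adj G S (\<phi> x) (\<phi> y))"

definition colour_preserving :: "('a, 'b) monoid_scheme \<Rightarrow> 'a set \<Rightarrow> ('a \<Rightarrow> 'a) \<Rightarrow> bool" where
  "colour_preserving G S \<phi> \<longleftrightarrow> cay_aut G S \<phi> \<and>
     (\<forall>x y. cay_adj G S x y \<longrightarrow> cay_colour G (\<phi> x) (\<phi> y) = cay_colour G x y)"

definition colour_permuting :: "('a, 'b) monoid_scheme \<Rightarrow> 'a set \<Rightarrow> ('a \<Rightarrow> 'a) \<Rightarrow> bool" where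
  "colour_permuting G S \<phi> \<longleftrightarrow> cay_aut G S \<phi> \<and>
     (\<forall>x y u v. cay_adj G S x y \<longrightarrow> cay_adj G S u v \<longrightarrow>
        cay_colour G x y = cay_colour G u v \<longrightarrow>
        cay_colour G (\<phi> x) (\<phi> y) = cay_colour G (\<phi> u) (\<phi> v))"

definition affine_map :: "('a, 'b) monoid_scheme \<Rightarrow> ('a \<Rightarrow> 'a) \<Rightarrow> bool" where
  "affine_map G \<phi> \<longleftrightarrow> (\<exists>\<alpha> \<in> iso G G. \<exists>g \<in> carrier G.
      \<forall>x \<in> carrier G. \<phi> x = \<alpha> (g \<otimes>\<^bsub>G\<^esub> x))"

definition strongly_CCA :: "('a, 'b) monoid_scheme \<Rightarrow> 'a set \<Rightarrow> bool" where
  "strongly_CCA G S \<longleftrightarrow> (\<forall>\<phi>. colour_permuting G S \<phi> \<longrightarrow> affine_map G \<phi>)"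

definition A0_one :: "('a, 'b) monoid_scheme \<Rightarrow> 'a set \<Rightarrow> ('a \<Rightarrow> 'a) set" where
  "A0_one G S = {\<phi>. colour_preserving G S \<phi> \<and> \<phi> \<one>\<^bsub>G\<^esub> = \<one>\<^bsub>G\<^esub>}"

text \<open>S^*: elements of S fixed by no nontrivial element of A^0_1(X)
  (nontrivial = not the identity on the vertex set).\<close>
definition S_star :: "('a, 'b) monoid_scheme \<Rightarrow> 'a set \<Rightarrow> 'a set" where
  "S_star G S = {s \<in> S. \<forall>\<phi> \<in> A0_one G S. \<phi> s = s \<longrightarrow> (\<forall>x \<in> carrier G. \<phi> x = x)}"

end

theory Submission
  imports Defs
begin
context group begin

lemma inv_gx_gy: "g \<in> carrier G \<Longrightarrow> x \<in> carrier G \<Longrightarrow> y \<in> carrier G \<Longrightarrow>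
  inv (g \<otimes> x) \<otimes> (g \<otimes> y) = inv x \<otimes> y"
  by (simp add: inv_mult_group m_assoc[symmetric]) (simp add: m_assoc)

lemma adj_transl: "g \<in> carrier G \<Longrightarrow> x \<in> carrier G \<Longrightarrow> y \<in> carrier G \<Longrightarrow>
  cay_adj G S (g \<otimes> x) (g \<otimes> y) \<longleftrightarrow> cay_adj G S x y"
  unfolding cay_adj_def by (simp add: inv_gx_gy)

lemma colour_transl: "g \<in> carrier G \<Longrightarrow> x \<in> carrier G \<Longrightarrow> y \<in> carrier G \<Longrightarrow>
  cay_colour G (g \<otimes> x) (g \<otimes> y) = cay_colour G x y"
  unfolding cay_colour_def by (simp add: inv_gx_gy)

lemma colour_one: "u \<in> carrier G \<Longrightarrow> cay_colour G \<one> u = {u, inv u}"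
  unfolding cay_colour_def by simp

lemma adj_carrier: "cay_adj G S x y \<Longrightarrow> x \<in> carrier G \<and> y \<in> carrier G"
  unfolding cay_adj_def by simp

lemma aut_comp: assumes f: "cay_aut G S f" and g: "cay_aut G S g" shows "cay_aut G S (f \<circ> g)"
proof -
  have fb: "bij_betw f (carrier G) (carrier G)" and fa: "\<And>x y. x \<in> carrier G \<Longrightarrow> y \<in> carrier G \<Longrightarrow> cay_adj G S x y = cay_adj G S (f x) (f y)"
    using f unfolding cay_aut_def by auto
  have gb: "bij_betw g (carrier G) (carrier G)" and ga: "\<And>x y. x \<in> carrier G \<Longrightarrow> y \<in> carrier G \<Longrightarrow> cay_adj G S x y = cay_adj G S (g x) (g y)"
    using g unfolding cay_aut_def by auto
  have "bij_betw (f \<circ> g) (carrier G) (carrier G)" using bij_betw_trans[OF gb fb] .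
  moreover have "cay_adj G S x y = cay_adj G S ((f \<circ> g) x) ((f \<circ> g) y)" if x: "x \<in> carrier G" and y: "y \<in> carrier G" for x y
  proof -
    have gx: "g x \<in> carrier G" and gy: "g y \<in> carrier G" using bij_betw_apply[OF gb] x y by auto
    show ?thesis unfolding comp_apply by (subst ga[OF x y]) (rule fa[OF gx gy])
  qed
  ultimately show ?thesis unfolding cay_aut_def by blast
qed

lemma aut_inv: assumes f: "cay_aut G S f" shows "cay_aut G S (inv_into (carrier G) f)"
proof -
  have fb: "bij_betw f (carrier G) (carrier G)" and fa: "\<And>x y. x \<in> carrier G \<Longrightarrow> y \<in> carrier G \<Longrightarrow> cay_adj G S x y = cay_adj G S (f x) (f y)"
    using f unfolding cay_aut_def by auto
  have b: "bij_betw (inv_into (carrier G) f) (carrier G) (carrier G)" using bij_betw_inv_into[OF fb] .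
  have s: "f ` carrier G = carrier G" using fb bij_betw_imp_surj_on by blast
  have "cay_adj G S x y = cay_adj G S (inv_into (carrier G) f x) (inv_into (carrier G) f y)" if x: "x \<in> carrier G" and y: "y \<in> carrier G" for x y
  proof -
    have c: "inv_into (carrier G) f x \<in> carrier G" "inv_into (carrier G) f y \<in> carrier G"
      using bij_betw_apply[OF b] x y by auto
    have e: "f (inv_into (carrier G) f x) = x" "f (inv_into (carrier G) f y) = y"
      using x y s f_inv_into_f by metis+
    show ?thesis using fa[OF c] unfolding e by (rule sym)
  qed
  then show ?thesis using b unfolding cay_aut_def by blast
qed

lemma aut_transl: "g \<in> carrier G \<Longrightarrow> cay_aut G S (\<lambda>x. g \<otimes> x)"
  unfolding cay_aut_def
proof (intro conjI ballI)
  assume g: "g \<in> carrier G"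
  show "bij_betw (\<lambda>x. g \<otimes> x) (carrier G) (carrier G)"
    by (rule bij_betw_byWitness[where f'="\<lambda>x. inv g \<otimes> x"])
       (use g in \<open>auto simp: m_assoc[symmetric]\<close>)
  fix x y assume "x \<in> carrier G" "y \<in> carrier G"
  then show "cay_adj G S x y = cay_adj G S (g \<otimes> x) (g \<otimes> y)" using adj_transl g by simp
qed

lemma cp_comp: "colour_preserving G S f \<Longrightarrow> colour_preserving G S g \<Longrightarrow> colour_preserving G S (f \<circ> g)"
proof -
  assume f: "colour_preserving G S f" and g: "colour_preserving G S g"
  have "cay_aut G S (f \<circ> g)" using f g aut_comp unfolding colour_preserving_def by blast
  moreover have "cay_colour G ((f \<circ> g) x) ((f \<circ> g) y) = cay_colour G x y" if a: "cay_adj G S x y" for x y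
  proof -
    have "cay_adj G S (g x) (g y)" using a g adj_carrier[OF a] unfolding colour_preserving_def cay_aut_def by blast
    then show ?thesis using f g a unfolding colour_preserving_def by simp
  qed
  ultimately show ?thesis unfolding colour_preserving_def by blast
qed

lemma A0_comp: "f \<in> A0_one G S \<Longrightarrow> g \<in> A0_one G S \<Longrightarrow> f \<circ> g \<in> A0_one G S"
  unfolding A0_one_def using cp_comp by auto

lemma A0_nbr: assumes "S \<subseteq> carrier G" "\<rho> \<in> A0_one G S" "s \<in> S" "s \<noteq> \<one>"
  shows "\<rho> s = s \<or> \<rho> s = inv s"
proof -
  have s: "s \<in> carrier G" using assms by auto
  have adj: "cay_adj G S \<one> s" using assms s unfolding cay_adj_def by auto
  have r1: "\<rho> \<one> = \<one>" and cp: "colour_preserving G S \<rho>" using assms(2) unfolding A0_one_def by auto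
  have "cay_adj G S (\<rho> \<one>) (\<rho> s)" using adj cp s unfolding colour_preserving_def cay_aut_def
    by simp
  then have rs: "\<rho> s \<in> carrier G" using adj_carrier by blast
  have "cay_colour G (\<rho> \<one>) (\<rho> s) = cay_colour G \<one> s" using adj cp unfolding colour_preserving_def by blast
  then have "{\<rho> s, inv (\<rho> s)} = {s, inv s}" using colour_one rs s r1 by simp
  then show ?thesis by blast
qed


lemma A0_swap: assumes SG: "S \<subseteq> carrier G" and Sinv: "\<forall>s\<in>S. inv s \<in> S"
  and r: "\<rho> \<in> A0_one G S" and sS: "s \<in> S" and s1: "s \<noteq> \<one>" and ne: "\<rho> s \<noteq> s"
  shows "\<rho> s = inv s \<and> \<rho> (inv s) = s \<and> inv s \<noteq> s"
proof -
  have s: "s \<in> carrier G" using SG sS by auto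
  have a: "\<rho> s = inv s" using A0_nbr[OF SG r sS s1] ne by blast
  have b: "inv s \<noteq> s" using a ne by simp
  have is1: "inv s \<noteq> \<one>" using s1 s by (metis inv_inv inv_one)
  have iS: "inv s \<in> S" using Sinv sS by blast
  have inj: "inj_on \<rho> (carrier G)" using r unfolding A0_one_def colour_preserving_def cay_aut_def
    by (auto dest: bij_betw_imp_inj_on)
  have "\<rho> (inv s) = inv s \<or> \<rho> (inv s) = inv (inv s)" using A0_nbr[OF SG r iS is1] .
  moreover have "\<rho> (inv s) \<noteq> inv s"
  proof
    assume "\<rho> (inv s) = inv s"
    then have "\<rho> (inv s) = \<rho> s" using a by simp
    then show False using inj s b by (meson inj_on_def inv_closed)
  qed
  ultimately have "\<rho> (inv s) = s" using s by simp
  then show ?thesis using a b by blast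
qed

lemma Sstar_id: "s \<in> S_star G S \<Longrightarrow> \<rho> \<in> A0_one G S \<Longrightarrow> \<rho> s = s \<Longrightarrow> \<forall>x\<in>carrier G. \<rho> x = x"
  unfolding S_star_def by blast

lemma core: assumes SG: "S \<subseteq> carrier G" and Sinv: "\<forall>s\<in>S. inv s \<in> S"
  and cp: "colour_permuting G S \<phi>" and p1: "\<phi> \<one> = \<one>" and sS: "s \<in> S_star G S"
  shows "\<forall>x\<in>carrier G. \<phi> (s \<otimes> x) = \<phi> s \<otimes> \<phi> x"
proof -
  have sS': "s \<in> S" using sS unfolding S_star_def by blast
  have s: "s \<in> carrier G" using SG sS' by auto
  have pa: "cay_aut G S \<phi>" using cp unfolding colour_permuting_def by blast
  have pb: "bij_betw \<phi> (carrier G) (carrier G)" using pa unfolding cay_aut_def by blast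
  have pc: "\<And>x. x \<in> carrier G \<Longrightarrow> \<phi> x \<in> carrier G" using bij_betw_apply[OF pb] .
  have pinj: "inj_on \<phi> (carrier G)" using pb bij_betw_imp_inj_on by blast
  have psurj: "\<phi> ` carrier G = carrier G" using pb bij_betw_imp_surj_on by blast
  define \<phi>i where "\<phi>i = inv_into (carrier G) \<phi>"
  have pia: "cay_aut G S \<phi>i" unfolding \<phi>i_def using aut_inv[OF pa] .
  have pic: "\<And>u. u \<in> carrier G \<Longrightarrow> \<phi>i u \<in> carrier G" unfolding \<phi>i_def using psurj by (metis inv_into_into)
  have ppi: "\<And>u. u \<in> carrier G \<Longrightarrow> \<phi> (\<phi>i u) = u" unfolding \<phi>i_def using psurj by (metis f_inv_into_f)
  have pip: "\<And>x. x \<in> carrier G \<Longrightarrow> \<phi>i (\<phi> x) = x" unfolding \<phi>i_def using pinj by (metis inv_into_f_f)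
  have perm: "\<And>a b u v. cay_adj G S a b \<Longrightarrow> cay_adj G S u v \<Longrightarrow> cay_colour G a b = cay_colour G u v \<Longrightarrow>
      cay_colour G (\<phi> a) (\<phi> b) = cay_colour G (\<phi> u) (\<phi> v)" using cp unfolding colour_permuting_def by blast
  have pi1: "\<phi>i \<one> = \<one>" using pip[of \<one>] p1 by simp
  have adjpi: "\<And>u v. cay_adj G S u v \<Longrightarrow> cay_adj G S (\<phi>i u) (\<phi>i v)"
    using pia adj_carrier unfolding cay_aut_def by blast
  have ps: "\<phi> s \<in> carrier G" using pc s .
  define \<theta> where "\<theta> = (\<lambda>u. inv (\<phi> s) \<otimes> \<phi> (s \<otimes> \<phi>i u))"
  have th_eq: "\<theta> = (\<lambda>u. inv (\<phi> s) \<otimes> u) \<circ> \<phi> \<circ> (\<lambda>u. s \<otimes> u) \<circ> \<phi>i"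
    unfolding \<theta>_def by (simp add: o_def)
  have tha: "cay_aut G S \<theta>" unfolding th_eq
    by (intro aut_comp aut_transl pa pia s inv_closed ps)
  have thcol: "cay_colour G (\<theta> u) (\<theta> v) = cay_colour G u v" if uv: "cay_adj G S u v" for u v
  proof -
    have u: "u \<in> carrier G" and v: "v \<in> carrier G" using adj_carrier[OF uv] by auto
    have ab: "cay_adj G S (\<phi>i u) (\<phi>i v)" using adjpi[OF uv] .
    have a: "\<phi>i u \<in> carrier G" and b: "\<phi>i v \<in> carrier G" using pic u v by auto
    have sab: "cay_adj G S (s \<otimes> \<phi>i u) (s \<otimes> \<phi>i v)" using adj_transl[OF s a b] ab by simp
    have "cay_colour G (s \<otimes> \<phi>i u) (s \<otimes> \<phi>i v) = cay_colour G (\<phi>i u) (\<phi>i v)" using colour_transl[OF s a b] .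
    then have "cay_colour G (\<phi> (s \<otimes> \<phi>i u)) (\<phi> (s \<otimes> \<phi>i v)) = cay_colour G (\<phi> (\<phi>i u)) (\<phi> (\<phi>i v))"
      using perm[OF sab ab] by blast
    also have "\<dots> = cay_colour G u v" using ppi u v by simp
    finally have e: "cay_colour G (\<phi> (s \<otimes> \<phi>i u)) (\<phi> (s \<otimes> \<phi>i v)) = cay_colour G u v" .
    have "cay_colour G (\<theta> u) (\<theta> v) = cay_colour G (\<phi> (s \<otimes> \<phi>i u)) (\<phi> (s \<otimes> \<phi>i v))"
      unfolding \<theta>_def using colour_transl[OF inv_closed[OF ps] pc pc] s a b by simp
    then show ?thesis using e by simp
  qed
  have th1: "\<theta> \<one> = \<one>" unfolding \<theta>_def using pi1 s ps by simp
  have thA: "\<theta> \<in> A0_one G S" unfolding A0_one_def colour_preserving_def using tha thcol th1 by blast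
  have thc: "\<And>u. u \<in> carrier G \<Longrightarrow> \<theta> u \<in> carrier G" using tha unfolding cay_aut_def by (meson bij_betw_apply)
  have "\<forall>u\<in>carrier G. \<theta> u = u"
  proof (cases "\<theta> s = s")
    case True
    then show ?thesis using Sstar_id[OF sS thA] by blast
  next
    case False
    have s1: "s \<noteq> \<one>" using False th1 by auto
    from A0_swap[OF SG Sinv thA sS' s1 False]
    have ts: "\<theta> s = inv s" and tis: "\<theta> (inv s) = s" and nis: "inv s \<noteq> s" by auto
    have tt: "\<forall>x\<in>carrier G. \<theta> (\<theta> x) = x"
      using Sstar_id[OF sS A0_comp[OF thA thA]] ts tis by simp
    define \<sigma> where "\<sigma> = \<phi> \<circ> \<theta> \<circ> \<phi>i"
    have sa: "cay_aut G S \<sigma>" unfolding \<sigma>_def by (intro aut_comp pa tha pia)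
    have scol: "cay_colour G (\<sigma> u) (\<sigma> v) = cay_colour G u v" if uv: "cay_adj G S u v" for u v
    proof -
      have u: "u \<in> carrier G" and v: "v \<in> carrier G" using adj_carrier[OF uv] by auto
      have ab: "cay_adj G S (\<phi>i u) (\<phi>i v)" using adjpi[OF uv] .
      have tab: "cay_adj G S (\<theta> (\<phi>i u)) (\<theta> (\<phi>i v))" using ab tha adj_carrier[OF ab] unfolding cay_aut_def by blast
      have "cay_colour G (\<theta> (\<phi>i u)) (\<theta> (\<phi>i v)) = cay_colour G (\<phi>i u) (\<phi>i v)" using thcol[OF ab] .
      then have "cay_colour G (\<phi> (\<theta> (\<phi>i u))) (\<phi> (\<theta> (\<phi>i v))) = cay_colour G (\<phi> (\<phi>i u)) (\<phi> (\<phi>i v))"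
        using perm[OF tab ab] by blast
      then show ?thesis unfolding \<sigma>_def using ppi u v by simp
    qed
    have s1': "\<sigma> \<one> = \<one>" unfolding \<sigma>_def using pi1 th1 p1 by simp
    have sA: "\<sigma> \<in> A0_one G S" unfolding A0_one_def colour_preserving_def using sa scol s1' by blast
    have sphi: "\<And>x. x \<in> carrier G \<Longrightarrow> \<sigma> (\<phi> x) = \<phi> (\<theta> x)" unfolding \<sigma>_def using pip by simp
    have sne: "\<sigma> s \<noteq> s"
    proof
      assume "\<sigma> s = s"
      then have "\<sigma> (\<phi> s) = \<phi> s" using Sstar_id[OF sS sA] ps by blast
      then have "\<phi> (\<theta> s) = \<phi> s" using sphi s by simp
      then have "\<theta> s = s" using pinj thc s unfolding inj_on_def by blast
      then show False using False by simp
    qed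
    from A0_swap[OF SG Sinv sA sS' s1 sne]
    have ss: "\<sigma> s = inv s" and sis: "\<sigma> (inv s) = s" by auto
    have st: "\<forall>x\<in>carrier G. \<sigma> (\<theta> x) = x"
      using Sstar_id[OF sS A0_comp[OF sA thA]] ts sis by simp
    have s_eq_t: "\<And>y. y \<in> carrier G \<Longrightarrow> \<sigma> y = \<theta> y"
      using st tt thc by metis
    have comm: "\<And>x. x \<in> carrier G \<Longrightarrow> \<phi> (\<theta> x) = \<theta> (\<phi> x)"
      using sphi s_eq_t pc by metis
    have is_: "inv s \<in> carrier G" using s by simp
    have "\<theta> (\<phi> (inv s)) = inv (\<phi> s)"
      unfolding \<theta>_def using pip[OF is_] s p1 ps by simp
    moreover have "\<theta> (\<phi> (inv s)) = \<phi> s" using comm[OF is_] tis by simp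
    ultimately have invt: "inv (\<phi> s) = \<phi> s" by simp
    have a1: "cay_adj G S \<one> s" using s s1 sS' unfolding cay_adj_def by auto
    have iS: "inv s \<in> S" using Sinv sS' by blast
    have ne1: "\<one> \<noteq> inv s" using s s1 by (metis inv_inv inv_one)
    have a2: "cay_adj G S \<one> (inv s)" unfolding cay_adj_def using s iS ne1 by simp
    have "cay_colour G \<one> s = cay_colour G \<one> (inv s)" using colour_one s is_ by auto
    then have "cay_colour G (\<phi> \<one>) (\<phi> s) = cay_colour G (\<phi> \<one>) (\<phi> (inv s))" using perm[OF a1 a2] by blast
    then have "{\<phi> s, inv (\<phi> s)} = {\<phi> (inv s), inv (\<phi> (inv s))}" using colour_one ps pc[OF is_] p1 by simp
    then have "\<phi> (inv s) = \<phi> s" using invt by auto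
    then have "inv s = s" using pinj s is_ unfolding inj_on_def by blast
    then show ?thesis using nis by simp
  qed
  then show ?thesis
  proof (intro ballI)
    fix x assume x: "x \<in> carrier G" and th: "\<forall>u\<in>carrier G. \<theta> u = u"
    have "\<theta> (\<phi> x) = \<phi> x" using th pc x by blast
    then have "inv (\<phi> s) \<otimes> \<phi> (s \<otimes> x) = \<phi> x" unfolding \<theta>_def using pip x by simp
    then show "\<phi> (s \<otimes> x) = \<phi> s \<otimes> \<phi> x" using inv_solve_left' ps pc x s by simp
  qed
qed


lemma hom_of_cp: assumes SG: "S \<subseteq> carrier G" and Sinv: "\<forall>s\<in>S. inv s \<in> S"
  and gen: "generate G (S_star G S) = carrier G"
  and cp: "colour_permuting G S \<phi>" and p1: "\<phi> \<one> = \<one>"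
  shows "\<forall>g\<in>carrier G. \<forall>x\<in>carrier G. \<phi> (g \<otimes> x) = \<phi> g \<otimes> \<phi> x"
proof -
  have pa: "cay_aut G S \<phi>" using cp unfolding colour_permuting_def by blast
  have pc: "\<And>x. x \<in> carrier G \<Longrightarrow> \<phi> x \<in> carrier G" using pa unfolding cay_aut_def by (meson bij_betw_apply)
  define H where "H = {g \<in> carrier G. \<forall>x\<in>carrier G. \<phi> (g \<otimes> x) = \<phi> g \<otimes> \<phi> x}"
  have Hinv: "inv h \<in> H" if h: "h \<in> H" for h
  proof -
    have hc: "h \<in> carrier G" and hx: "\<And>x. x \<in> carrier G \<Longrightarrow> \<phi> (h \<otimes> x) = \<phi> h \<otimes> \<phi> x"
      using h unfolding H_def by auto
    have ih: "inv h \<in> carrier G" using hc by simp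
    have key: "\<phi> (inv h \<otimes> x) = inv (\<phi> h) \<otimes> \<phi> x" if x: "x \<in> carrier G" for x
    proof -
      have "\<phi> x = \<phi> h \<otimes> \<phi> (inv h \<otimes> x)" using hx[of "inv h \<otimes> x"] hc x
        by (simp add: m_assoc[symmetric])
      moreover have yc: "\<phi> (inv h \<otimes> x) \<in> carrier G" using pc ih x by simp
      ultimately show ?thesis using inv_solve_left[OF yc pc[OF hc] pc[OF x]] by simp
    qed
    have "\<phi> (inv h) = inv (\<phi> h)" using key[of \<one>] p1 ih pc hc by simp
    then show ?thesis unfolding H_def using key ih by simp
  qed
  have "g \<in> H" if "g \<in> generate G (S_star G S)" for g
    using that
  proof (induction rule: generate.induct)
    case one
    then show ?case unfolding H_def using p1 pc by simp
  next
    case (incl h)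
    have "h \<in> carrier G" using incl SG unfolding S_star_def by auto
    then show ?case unfolding H_def using core[OF SG Sinv cp p1 incl] by simp
  next
    case (inv h)
    have "h \<in> carrier G" using inv SG unfolding S_star_def by auto
    then have "h \<in> H" unfolding H_def using core[OF SG Sinv cp p1 inv] by simp
    then show ?case using Hinv by blast
  next
    case (eng h1 h2)
    then show ?case unfolding H_def using pc by (simp add: m_assoc)
  qed
  then show ?thesis using gen unfolding H_def by blast
qed

lemma main: assumes SG: "S \<subseteq> carrier G" and Sinv: "\<forall>s\<in>S. inv s \<in> S"
  and gen: "generate G (S_star G S) = carrier G"
  shows "strongly_CCA G S"
  unfolding strongly_CCA_def
proof (intro allI impI)
  fix \<phi> assume cp: "colour_permuting G S \<phi>"
  have pa: "cay_aut G S \<phi>" using cp unfolding colour_permuting_def by blast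
  have pc: "\<And>x. x \<in> carrier G \<Longrightarrow> \<phi> x \<in> carrier G" using pa unfolding cay_aut_def by (meson bij_betw_apply)
  define c where "c = \<phi> \<one>"
  have cc: "c \<in> carrier G" unfolding c_def using pc by simp
  define \<phi>0 where "\<phi>0 = (\<lambda>x. inv c \<otimes> x) \<circ> \<phi>"
  have p0a: "cay_aut G S \<phi>0" unfolding \<phi>0_def by (intro aut_comp aut_transl pa inv_closed cc)
  have p0col: "cay_colour G (\<phi>0 x) (\<phi>0 y) = cay_colour G (\<phi> x) (\<phi> y)" if "x \<in> carrier G" "y \<in> carrier G" for x y
    unfolding \<phi>0_def using colour_transl[OF inv_closed[OF cc] pc pc] that by simp
  have p0cp: "colour_permuting G S \<phi>0"
    unfolding colour_permuting_def
  proof (intro conjI allI impI p0a)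
    fix x y u v assume a: "cay_adj G S x y" and b: "cay_adj G S u v" and e: "cay_colour G x y = cay_colour G u v"
    have "cay_colour G (\<phi> x) (\<phi> y) = cay_colour G (\<phi> u) (\<phi> v)" using cp a b e unfolding colour_permuting_def by blast
    then show "cay_colour G (\<phi>0 x) (\<phi>0 y) = cay_colour G (\<phi>0 u) (\<phi>0 v)"
      using p0col adj_carrier[OF a] adj_carrier[OF b] by simp
  qed
  have p01: "\<phi>0 \<one> = \<one>" unfolding \<phi>0_def c_def using cc c_def by simp
  have hm: "\<forall>g\<in>carrier G. \<forall>x\<in>carrier G. \<phi>0 (g \<otimes> x) = \<phi>0 g \<otimes> \<phi>0 x"
    using hom_of_cp[OF SG Sinv gen p0cp p01] .
  have p0b: "bij_betw \<phi>0 (carrier G) (carrier G)" using p0a unfolding cay_aut_def by blast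
  have "\<phi>0 \<in> hom G G" unfolding hom_def using bij_betw_apply[OF p0b] hm by (simp add: Pi_iff)
  then have iso: "\<phi>0 \<in> iso G G" unfolding iso_def using p0b by simp
  have "c \<in> \<phi>0 ` carrier G" using bij_betw_imp_surj_on[OF p0b] cc by simp
  then obtain g where g: "g \<in> carrier G" "\<phi>0 g = c" by (auto simp del: comp_apply)
  have "\<forall>x\<in>carrier G. \<phi> x = \<phi>0 (g \<otimes> x)"
  proof
    fix x assume x: "x \<in> carrier G"
    have "\<phi>0 (g \<otimes> x) = c \<otimes> (inv c \<otimes> \<phi> x)" using hm g x unfolding \<phi>0_def by simp
    also have "\<dots> = \<phi> x" using cc pc x by (simp add: m_assoc[symmetric])
    finally show "\<phi> x = \<phi>0 (g \<otimes> x)" by simp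
  qed
  then show "affine_map G \<phi>" unfolding affine_map_def using iso g by blast
qed

end

theorem lemma4p4:
  fixes G (structure) and S :: "'a set"
  assumes "group G"
    and "S \<subseteq> carrier G"
    and "\<forall>s \<in> S. inv\<^bsub>G\<^esub> s \<in> S"
    and "generate G (S_star G S) = carrier G"
  shows "strongly_CCA G S"
  using group.main[OF assms(1) assms(2) assms(3) assms(4)] .

end
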